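(* Assume the setting of the integrated dissipation equalities: $L>0$, $g>0$, $b\in\mathbb{R}$, $v,\theta\in C^2([0,L])$ with $v>0$, $p,q$ continuous on $[0,L]$ satisfying $$p+b\left(2vv'\theta'+v^2\theta''\right)+g\left(vv''-v^2(\theta')^2\right)=0,\qquad q+b\left(vv''-v^2(\theta')^2\right)-g\left(2vv'\theta'+v^2\theta''\right)=0,$$ and $\theta(0)=0$, $v(0)=1$, $\theta'(L)=0$, $v'(L)=0$. Suppose moreover $b\ge 0$ and $p(x)\le 0$, $q(x)\le 0$ for all $x\in[0,L]$. Then $v'(0)\le 0$ (voltage drop). Furthermore, $$\theta'(0)\le 0\iff \frac{b}{g}\int_0^Lp(x)\,dx\le\int_0^Lq(x)\,dx\ (\le 0).$$
   Context: Primes denote $d/dx$. $v$ is voltage amplitude, $\theta$ voltage phase, $p,q$ active/reactive power injections at position $x$ (nonpositive values mean consumption by loads), $g$ conductance and $b$ susceptance per unit length of a straight feeder with transformer at $x=0$. *)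

theory Defs
  imports "HOL-Analysis.Analysis"
begin

end

theory Submission
  imports Defs "HOL-Analysis.Analysis"
begin

theorem mainTheorem5:
  fixes L g b :: real
    and v v' v'' \<theta> \<theta>' \<theta>'' p q :: "real \<Rightarrow> real"
  assumes L_pos: "L > 0" and g_pos: "g > 0"
    and dv: "\<And>x. x \<in> {0..L} \<Longrightarrow> (v has_real_derivative v' x) (at x within {0..L})"
    and dv': "\<And>x. x \<in> {0..L} \<Longrightarrow> (v' has_real_derivative v'' x) (at x within {0..L})"
    and cv'': "continuous_on {0..L} v''"
    and dth: "\<And>x. x \<in> {0..L} \<Longrightarrow> (\<theta> has_real_derivative \<theta>' x) (at x within {0..L})"
    and dth': "\<And>x. x \<in> {0..L} \<Longrightarrow> (\<theta>' has_real_derivative \<theta>'' x) (at x within {0..L})"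
    and cth'': "continuous_on {0..L} \<theta>''"
    and v_pos: "\<And>x. x \<in> {0..L} \<Longrightarrow> v x > 0"
    and cp: "continuous_on {0..L} p" and cq: "continuous_on {0..L} q"
    and eqP: "\<And>x. x \<in> {0..L} \<Longrightarrow>
      p x + b * (2 * v x * v' x * \<theta>' x + (v x)\<^sup>2 * \<theta>'' x)
          + g * (v x * v'' x - (v x)\<^sup>2 * (\<theta>' x)\<^sup>2) = 0"
    and eqQ: "\<And>x. x \<in> {0..L} \<Longrightarrow>
      q x + b * (v x * v'' x - (v x)\<^sup>2 * (\<theta>' x)\<^sup>2)
          - g * (2 * v x * v' x * \<theta>' x + (v x)\<^sup>2 * \<theta>'' x) = 0"
    and bc: "\<theta> 0 = 0" "v 0 = 1" "\<theta>' L = 0" "v' L = 0"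
    and b_nonneg: "b \<ge> 0"
    and p_nonpos: "\<And>x. x \<in> {0..L} \<Longrightarrow> p x \<le> 0"
    and q_nonpos: "\<And>x. x \<in> {0..L} \<Longrightarrow> q x \<le> 0"
  shows "v' 0 \<le> 0
    \<and> (\<theta>' 0 \<le> 0 \<longleftrightarrow> b / g * integral {0..L} p \<le> integral {0..L} q)
    \<and> integral {0..L} q \<le> 0"
proof -
  define D where "D = b\<^sup>2 + g\<^sup>2"
  have Dpos: "D > 0" unfolding D_def using g_pos by (simp add: add_nonneg_pos)
  define A where "A x = 2 * v x * v' x * \<theta>' x + (v x)\<^sup>2 * \<theta>'' x" for x
  define B where "B x = v x * v'' x - (v x)\<^sup>2 * (\<theta>' x)\<^sup>2" for x
  have AB: "D * A x = g * q x - b * p x" "D * B x = - (g * p x + b * q x)" if "x \<in> {0..L}" for x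
  proof -
    have e1: "p x + b * A x + g * B x = 0" using eqP[OF that] unfolding A_def B_def .
    have e2: "q x + b * B x - g * A x = 0" using eqQ[OF that] unfolding A_def B_def .
    show "D * A x = g * q x - b * p x" unfolding D_def power2_eq_square
      using e1 e2 by algebra
    show "D * B x = - (g * p x + b * q x)" unfolding D_def power2_eq_square
      using e1 e2 by algebra
  qed
  have Bnn: "B x \<ge> 0" if "x \<in> {0..L}" for x
  proof -
    have "g * p x + b * q x \<le> 0"
      using p_nonpos[OF that] q_nonpos[OF that] g_pos b_nonneg
      by (smt (verit) mult_nonneg_nonpos)
    then have "D * B x \<ge> 0" using AB(2)[OF that] by simp
    then show ?thesis using Dpos by (simp add: zero_le_mult_iff)
  qed
  have v''nn: "v'' x \<ge> 0" if "x \<in> {0..L}" for x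
  proof -
    have "v x * v'' x \<ge> (v x)\<^sup>2 * (\<theta>' x)\<^sup>2" using Bnn[OF that] unfolding B_def by simp
    moreover have "(v x)\<^sup>2 * (\<theta>' x)\<^sup>2 \<ge> 0" by simp
    ultimately have "v x * v'' x \<ge> 0" by linarith
    then show ?thesis using v_pos[OF that] by (simp add: zero_le_mult_iff)
  qed
  have part1: "v' 0 \<le> 0"
  proof -
    have "\<exists>x\<in>{0..L}. v' L - v' 0 = (\<lambda>h. v'' x * h) (L - 0)"
      apply (rule mvt_very_simple[of 0 L v' "\<lambda>x h. v'' x * h"])
      using L_pos apply simp
      using dv' by (simp add: has_field_derivative_def)
    then obtain x where "x \<in> {0..L}" "v' L - v' 0 = v'' x * L" by auto
    then show ?thesis using v''nn[of x] L_pos bc(4) by (smt (verit) mult_nonneg_nonneg atLeastAtMost_iff)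
  qed
  have intp: "(p has_integral integral {0..L} p) {0..L}"
    using integrable_continuous_interval[OF cp] by (simp add: integrable_integral)
  have intq: "(q has_integral integral {0..L} q) {0..L}"
    using integrable_continuous_interval[OF cq] by (simp add: integrable_integral)
  have ftc: "(A has_integral ((\<lambda>x. (v x)\<^sup>2 * \<theta>' x) L - (\<lambda>x. (v x)\<^sup>2 * \<theta>' x) 0)) {0..L}"
  proof (rule fundamental_theorem_of_calculus)
    show "0 \<le> L" using L_pos by simp
    fix x assume x: "x \<in> {0..L}"
    have "((\<lambda>x. (v x)\<^sup>2 * \<theta>' x) has_real_derivative
        ((2 * v x * v' x) * \<theta>' x + (v x)\<^sup>2 * \<theta>'' x)) (at x within {0..L})"
      by (rule derivative_eq_intros dv[OF x] dth'[OF x] refl | simp)+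
    then show "((\<lambda>x. (v x)\<^sup>2 * \<theta>' x) has_vector_derivative A x) (at x within {0..L})"
      unfolding A_def by (simp add: has_real_derivative_iff_has_vector_derivative)
  qed
  then have ftc': "(A has_integral (- \<theta>' 0)) {0..L}" using bc by simp
  have "((\<lambda>x. D * A x) has_integral (D * (- \<theta>' 0))) {0..L}"
    using has_integral_mult_right[OF ftc'] .
  then have i1: "((\<lambda>x. g * q x - b * p x) has_integral (D * (- \<theta>' 0))) {0..L}"
    by (rule has_integral_eq[rotated]) (simp add: AB(1))
  have i2: "((\<lambda>x. g * q x - b * p x) has_integral (g * integral {0..L} q - b * integral {0..L} p)) {0..L}"
    by (intro has_integral_diff has_integral_mult_right intp intq)
  have key: "D * (- \<theta>' 0) = g * integral {0..L} q - b * integral {0..L} p"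
    using has_integral_unique[OF i1 i2] .
  have part2: "\<theta>' 0 \<le> 0 \<longleftrightarrow> b / g * integral {0..L} p \<le> integral {0..L} q"
  proof -
    have "\<theta>' 0 \<le> 0 \<longleftrightarrow> D * (- \<theta>' 0) \<ge> 0" using Dpos by (simp add: mult_le_0_iff)
    also have "\<dots> \<longleftrightarrow> b * integral {0..L} p \<le> g * integral {0..L} q" using key by linarith
    also have "\<dots> \<longleftrightarrow> b / g * integral {0..L} p \<le> integral {0..L} q"
      using g_pos by (simp add: field_simps)
    finally show ?thesis .
  qed
  have part3: "integral {0..L} q \<le> 0"
  proof -
    have "((\<lambda>x. - q x) has_integral - integral {0..L} q) {0..L}" using has_integral_neg[OF intq] .
    then have "0 \<le> - integral {0..L} q" by (rule has_integral_nonneg) (use q_nonpos in auto)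
    then show ?thesis by simp
  qed
  show ?thesis using part1 part2 part3 by blast
qed

end
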